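(* A powerful set $S\subseteq 2^E$ is linear if and only if $r_S(X)\le |X|$ for all $X\subseteq E$.
   Context: For a finite set $E$, $S\subseteq 2^E$ is powerful if for every $X\subseteq E$ the number of members of $S$ contained in $X$ is a power of 2. Its rank function is $r_S(X)=\log_2\big(|S|/|\{Y\in S:Y\subseteq E\setminus X\}|\big)$. $S$ is linear if it is a binary linear space, i.e. $\emptyset\in S$ and $S$ is closed under symmetric difference. *)

theory Defs
  imports Complex_Main
begin

definition powerful :: "'a set \<Rightarrow> 'a set set \<Rightarrow> bool" where
  "powerful E S \<longleftrightarrow> S \<subseteq> Pow E \<and>
     (\<forall>X. X \<subseteq> E \<longrightarrow> (\<exists>k::nat. card {Y \<in> S. Y \<subseteq> X} = 2 ^ k))"

definition rank_S :: "'a set \<Rightarrow> 'a set set \<Rightarrow> 'a set \<Rightarrow> real" where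
  "rank_S E S X = log 2 (real (card S) / real (card {Y \<in> S. Y \<subseteq> E - X}))"

definition linear_space :: "'a set set \<Rightarrow> bool" where
  "linear_space S \<longleftrightarrow> {} \<in> S \<and> (\<forall>A\<in>S. \<forall>B\<in>S. (A - B) \<union> (B - A) \<in> S)"

end

theory Submission
  imports Defs
begin

definition sd :: "'a set \<Rightarrow> 'a set \<Rightarrow> 'a set" where
  "sd A B = (A - B) \<union> (B - A)"

lemma mem_sd[simp]: "x \<in> sd A B \<longleftrightarrow> (x \<in> A) \<noteq> (x \<in> B)"
  unfolding sd_def by blast
lemma sd_cancel[simp]: "sd A (sd A B) = B" unfolding sd_def by blast
lemma sd_cancel2[simp]: "sd (sd A B) B = A" unfolding sd_def by blast
lemma sd_empty[simp]: "sd A {} = A" "sd {} A = A" unfolding sd_def by blast+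
lemma sd_comm: "sd A B = sd B A" unfolding sd_def by blast
lemma sd_assoc: "sd (sd A B) C = sd A (sd B C)" unfolding sd_def by blast
lemma sd_left_comm: "sd A (sd B C) = sd B (sd A C)" unfolding sd_def by blast
lemma inj_sd: "inj_on (sd c) X"
  by (metis inj_onI sd_cancel)

lemma linear_space_sd: "linear_space S \<longleftrightarrow> {} \<in> S \<and> (\<forall>A\<in>S. \<forall>B\<in>S. sd A B \<in> S)"
  unfolding linear_space_def sd_def by blast

lemma IDX:
  assumes lin: "linear_space H" and fin: "finite H"
  shows "(\<forall>h\<in>H. w \<notin> h) \<or> 2 * card {h\<in>H. w \<notin> h} = card H"
proof (cases "\<forall>h\<in>H. w \<notin> h")
  case False
  then obtain h0 where h0: "h0 \<in> H" "w \<in> h0" by blast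
  have cl: "\<And>a b. a \<in> H \<Longrightarrow> b \<in> H \<Longrightarrow> sd a b \<in> H" using lin linear_space_sd by blast
  have "sd h0 ` {h\<in>H. w \<notin> h} = {h\<in>H. w \<in> h}"
  proof
    show "sd h0 ` {h \<in> H. w \<notin> h} \<subseteq> {h \<in> H. w \<in> h}" using h0 cl by auto
    show "{h \<in> H. w \<in> h} \<subseteq> sd h0 ` {h \<in> H. w \<notin> h}"
    proof
      fix h assume "h \<in> {h \<in> H. w \<in> h}"
      then have "sd h0 h \<in> {h \<in> H. w \<notin> h}" "h = sd h0 (sd h0 h)" using h0 cl by auto
      then show "h \<in> sd h0 ` {h \<in> H. w \<notin> h}" by blast
    qed
  qed
  then have c: "card {h\<in>H. w \<in> h} = card {h\<in>H. w \<notin> h}"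
    by (metis card_image inj_sd)
  have "card H = card {h\<in>H. w \<in> h} + card {h\<in>H. w \<notin> h}"
    using fin by (subst card_Un_disjoint[symmetric]) (auto intro: arg_cong[where f=card])
  then show ?thesis using c by simp
qed simp

lemma COS:
  assumes linI: "linear_space I" and linH: "linear_space H" and fin: "finite H"
  shows "card (H \<inter> sd c ` I) \<le> card (H \<inter> I)"
proof (cases "H \<inter> sd c ` I = {}")
  case False
  then obtain p0 where p0: "p0 \<in> H" "p0 \<in> sd c ` I" by blast
  have clI: "\<And>a b. a \<in> I \<Longrightarrow> b \<in> I \<Longrightarrow> sd a b \<in> I" using linI linear_space_sd by blast
  have clH: "\<And>a b. a \<in> H \<Longrightarrow> b \<in> H \<Longrightarrow> sd a b \<in> H" using linH linear_space_sd by blast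
  have "sd p0 ` (H \<inter> sd c ` I) \<subseteq> H \<inter> I"
  proof
    fix z assume "z \<in> sd p0 ` (H \<inter> sd c ` I)"
    then obtain p i where "z = sd p0 p" "p \<in> H" "i \<in> I" "p = sd c i" by blast
    moreover obtain i0 where "i0 \<in> I" "p0 = sd c i0" using p0 by blast
    ultimately show "z \<in> H \<inter> I" using clI clH p0
      by (metis IntI sd_assoc sd_cancel)
  qed
  then show ?thesis using fin card_mono card_image inj_sd by (metis finite_Int)
qed simp

lemma sd_swap: "sd (sd a b) (sd c d) = sd (sd a c) (sd b d)" unfolding sd_def by blast

lemma filt_ins: "{Y \<in> insert a X. P Y} = (if P a then insert a {Y\<in>X. P Y} else {Y\<in>X. P Y})"
  by auto

lemma card_Un4: "card (A \<union> B \<union> C \<union> D) \<le> card A + card B + card C + card D"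
  using card_Un_le[of "A \<union> B \<union> C" D] card_Un_le[of "A \<union> B" C] card_Un_le[of A B] by linarith

lemma par: "(n::nat) \<ge> 1 \<Longrightarrow> 4*n - 1 \<le> 2*k \<Longrightarrow> 2*k \<le> 4*n \<Longrightarrow> 2*k = 4*n" by presburger

lemma lemmaL:
  assumes finE: "finite E" and SE: "S \<subseteq> Pow E" and e0: "{} \<in> S" and En: "E \<noteq> {}"
  and Hlin: "\<And>z. z\<in>E \<Longrightarrow> linear_space {Y\<in>S. z\<notin>Y}"
  and Hcard: "\<And>z. z\<in>E \<Longrightarrow> 2 * card {Y\<in>S. z\<notin>Y} = card S"
  shows "linear_space S"
proof -
  define H where "H z = {Y\<in>S. z\<notin>Y}" for z
  have finS: "finite S" by (rule finite_subset[OF SE]) (simp add: finE)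
  have finH: "finite (H z)" for z using finS H_def by simp
  have HS: "H z \<subseteq> S" for z using H_def by auto
  have clH: "sd a b \<in> H z" if "z\<in>E" "a \<in> H z" "b \<in> H z" for z a b
    using Hlin[OF that(1)] that(2,3) unfolding H_def linear_space_sd by blast
  have linH: "linear_space (H z)" if "z \<in> E" for z using Hlin[OF that] H_def by simp
  have cH: "2 * card (H z) = card S" if "z \<in> E" for z using Hcard[OF that] H_def by simp
  have e0H: "{} \<in> H z" for z using e0 H_def by simp
  show ?thesis
  proof (cases "\<forall>x\<in>E. \<forall>y\<in>E. H x = H y")
    case True
    obtain x0 where x0: "x0 \<in> E" using En by blast
    have sub: "S - {E} \<subseteq> H x0"
    proof
      fix s assume s: "s \<in> S - {E}"
      then have "s \<subset> E" using SE by blast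
      then obtain z where "z \<in> E" "z \<notin> s" by blast
      then have "s \<in> H z" using s H_def by simp
      then show "s \<in> H x0" using True \<open>z\<in>E\<close> x0 by blast
    qed
    have "card S \<le> card (S - {E}) + 1"
    proof (cases "E \<in> S")
      case True
      then have "card S > 0" using finS card_gt_0_iff by blast
      then show ?thesis using True by (simp add: card_Diff_singleton)
    qed simp
    also have "\<dots> \<le> card (H x0) + 1" using card_mono[OF finH sub] by simp
    finally have c1: "card S \<le> card (H x0) + 1" .
    have "H x0 \<noteq> {}" using e0H by blast
    then have "card (H x0) \<ge> 1" using finH[of x0] by (simp add: Suc_le_eq card_gt_0_iff)
    then have cH1: "card (H x0) = 1" using c1 cH[OF x0] by linarith
    then obtain a where "H x0 = {a}" using card_1_singleton_iff[of "H x0"] by auto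
    then have "H x0 = {{}}" using e0H[of x0] by auto
    then have Ssub: "S \<subseteq> {{}, E}" using sub by blast
    have "card S = 2" using cH1 cH[OF x0] by simp
    moreover have "card {{}, E} \<le> 2" by (simp add: card_insert_if)
    ultimately have "S = {{}, E}" using Ssub card_seteq[of "{{},E}" S] by simp
    then show ?thesis unfolding linear_space_sd by auto
  next
    case False
    then obtain x y where xy: "x\<in>E" "y\<in>E" "H x \<noteq> H y" by blast
    have "\<not> H y \<subseteq> H x"
    proof
      assume "H y \<subseteq> H x"
      moreover have "card (H x) = card (H y)" using cH[OF xy(1)] cH[OF xy(2)] by simp
      ultimately have "H y = H x" using card_seteq[OF finH] by simp
      then show False using xy by simp
    qed
    then obtain A where A: "A \<in> S" "y \<notin> A" "x \<in> A" using H_def by auto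
    have "\<not> H x \<subseteq> H y"
    proof
      assume "H x \<subseteq> H y"
      moreover have "card (H x) = card (H y)" using cH[OF xy(1)] cH[OF xy(2)] by simp
      ultimately have "H x = H y" using card_seteq[OF finH] by simp
      then show False using xy by simp
    qed
    then obtain B where B: "B \<in> S" "x \<notin> B" "y \<in> B" using H_def by auto
    define I where "I = {Y\<in>S. x \<notin> Y \<and> y \<notin> Y}"
    have I_Hx: "I = {h \<in> H x. y \<notin> h}" and I_Hy: "I = {h\<in>H y. x\<notin>h}" unfolding I_def H_def by auto
    have IHx: "I \<subseteq> H x" "I \<subseteq> H y" unfolding I_def H_def by auto
    have IHxy: "H x \<inter> H y = I" unfolding I_def H_def by auto
    have finI: "finite I" using finS I_def by simp
    have "\<not> (\<forall>h\<in>H x. y \<notin> h)" using B H_def by auto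
    then have "2 * card {h \<in> H x. y \<notin> h} = card (H x)" using IDX[OF linH[OF xy(1)] finH, of y] by blast
    then have cI: "2 * card I = card (H x)" using I_Hx by simp
    have cSI: "card S = 4 * card I" using cI cH[OF xy(1)] by simp
    have cHy: "card (H y) = 2 * card I" using cSI cH[OF xy(2)] by simp
    have linI: "linear_space I" unfolding linear_space_sd
    proof (intro conjI ballI)
      show "{} \<in> I" using e0 I_def by simp
      fix a b assume "a \<in> I" "b \<in> I"
      then show "sd a b \<in> I" using clH[OF xy(1), of a b] IHx I_Hx by auto
    qed
    have clI: "sd a b \<in> I" if "a \<in> I" "b \<in> I" for a b using linI that linear_space_sd by blast
    have Hx_dec: "H x \<subseteq> I \<union> sd B ` I"
    proof
      fix p assume p: "p \<in> H x"
      show "p \<in> I \<union> sd B ` I"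
      proof (cases "y \<in> p")
        case True
        have "B \<in> H x" using B H_def by simp
        then have "sd B p \<in> I" using clH[OF xy(1) _ p] True B I_Hx by auto
        then show ?thesis by (metis UnI2 image_eqI sd_cancel)
      qed (use p I_Hx in auto)
    qed
    have Hy_dec: "H y \<subseteq> I \<union> sd A ` I"
    proof
      fix p assume p: "p \<in> H y"
      show "p \<in> I \<union> sd A ` I"
      proof (cases "x \<in> p")
        case True
        have "A \<in> H y" using A H_def by simp
        then have "sd A p \<in> I" using clH[OF xy(2) _ p] True A I_Hy by auto
        then show ?thesis by (metis UnI2 image_eqI sd_cancel)
      qed (use p I_Hy in auto)
    qed
    define V where "V = {sd p q | p q. p \<in> H x \<and> q \<in> H y}"
    define AB where "AB = sd (sd A B) ` I"
    have V_sub: "V \<subseteq> I \<union> sd A ` I \<union> sd B ` I \<union> AB"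
    proof
      fix v assume "v \<in> V"
      then obtain p q where v: "v = sd p q" "p \<in> H x" "q \<in> H y" using V_def by blast
      from v(2) Hx_dec consider "p \<in> I" | i where "i \<in> I" "p = sd B i" by blast
      then show "v \<in> I \<union> sd A ` I \<union> sd B ` I \<union> AB"
      proof cases
        case 1
        from v(3) Hy_dec consider "q \<in> I" | j where "j \<in> I" "q = sd A j" by blast
        then show ?thesis
        proof cases
          case 1
          then show ?thesis using \<open>p \<in> I\<close> v clI by blast
        next
          case 2
          have "v = sd A (sd p j)" using v 2 by (simp add: sd_left_comm)
          then show ?thesis using clI[OF \<open>p\<in>I\<close> 2(1)] by blast
        qed
      next
        case 2
        from v(3) Hy_dec consider "q \<in> I" | j where "j \<in> I" "q = sd A j" by blast
        then show ?thesis
        proof cases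
          case 1
          have "v = sd B (sd i q)" using v 2 by (simp add: sd_assoc)
          then show ?thesis using clI[OF 2(1) 1] by blast
        next
          case 3: 2
          have "v = sd (sd A B) (sd i j)" using v 2 3 unfolding sd_def by blast
          then show ?thesis using clI[OF 2(1) 3(1)] AB_def by blast
        qed
      qed
    qed
    have finV: "finite V" by (rule finite_subset[OF V_sub]) (simp add: finI AB_def)
    have cV: "card V \<le> card S"
    proof -
      have "card V \<le> card (I \<union> sd A ` I \<union> sd B ` I \<union> AB)"
        using V_sub finI AB_def by (intro card_mono) auto
      also have "\<dots> \<le> card I + card (sd A ` I) + card (sd B ` I) + card AB"
        using card_Un_le[of "I \<union> sd A ` I \<union> sd B ` I" AB] card_Un_le[of "I \<union> sd A ` I" "sd B ` I"]
          card_Un_le[of I "sd A ` I"] by linarith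
      also have "\<dots> \<le> 4 * card I" using card_image_le[OF finI] AB_def by (simp add: card_image inj_sd)
      finally show ?thesis using cSI by simp
    qed
    have linV: "linear_space V" unfolding linear_space_sd
    proof (intro conjI ballI)
      have "{} = sd {} {}" by simp
      then show "{} \<in> V" using e0H V_def by blast
      fix a b assume "a \<in> V" "b \<in> V"
      then obtain p q p' q' where "a = sd p q" "b = sd p' q'" "p \<in> H x" "q \<in> H y" "p' \<in> H x" "q' \<in> H y"
        using V_def by blast
      then have "sd a b = sd (sd p p') (sd q q')" "sd p p' \<in> H x" "sd q q' \<in> H y"
        using sd_swap clH xy by auto
      then show "sd a b \<in> V" using V_def by blast
    qed
    have clV: "sd a b \<in> V" if "a \<in> V" "b \<in> V" for a b using linV that linear_space_sd by blast
    have HxV: "H x \<subseteq> V"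
    proof
      fix p assume "p \<in> H x"
      moreover have "p = sd p {}" by simp
      ultimately show "p \<in> V" using e0H V_def by blast
    qed
    have HyV: "H y \<subseteq> V"
    proof
      fix p assume "p \<in> H y"
      moreover have "p = sd {} p" by simp
      ultimately show "p \<in> V" using e0H V_def by blast
    qed
    have IV: "I \<subseteq> V" using IHx HxV by blast
    have ABxy: "x \<in> w \<and> y \<in> w" if "w \<in> AB" for w using that AB_def A B I_def by auto
    have ABV: "AB \<subseteq> V"
    proof
      fix w assume "w \<in> AB"
      then obtain h where h: "h \<in> I" "w = sd (sd A B) h" using AB_def by blast
      have "B \<in> H x" "A \<in> H y" using A B H_def by auto
      then have "sd (sd B h) A \<in> V" using clH[OF xy(1)] h IHx V_def by blast
      moreover have "sd (sd B h) A = w" using h unfolding sd_def by blast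
      ultimately show "w \<in> V" by simp
    qed
    have VE: "V \<subseteq> Pow E"
    proof
      fix v assume "v \<in> V"
      then obtain p q where "v = sd p q" "p \<in> S" "q \<in> S" using V_def HS by blast
      then show "v \<in> Pow E" using SE unfolding sd_def by blast
    qed
    have ABS_pre: "w \<notin> H x \<and> w \<notin> H y" if "w \<in> AB" for w using ABxy[OF that] H_def by auto
    have claim: "H z \<subseteq> V" if z: "z \<in> E" for z
    proof (rule ccontr)
      assume "\<not> H z \<subseteq> V"
      then obtain q where q: "q \<in> H z" "q \<notin> V" by blast
      have outxy: "q' \<in> S \<and> x \<in> q' \<and> y \<in> q'" if "q' \<in> H z - V" for q'
        using that HxV HyV HS unfolding H_def by blast
      define J where "J = H z \<inter> I"
      have finJ: "finite J" using finI J_def by simp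
      have ca: "card (H z \<inter> V) \<le> card (H z - V)"
      proof -
        have "sd q ` (H z \<inter> V) \<subseteq> H z - V"
        proof
          fix u assume "u \<in> sd q ` (H z \<inter> V)"
          then obtain v where v: "v \<in> H z" "v \<in> V" "u = sd q v" by blast
          have "u \<in> H z" using clH[OF z q(1) v(1)] v by simp
          moreover have "u \<notin> V"
          proof
            assume "u \<in> V"
            then have "sd u v \<in> V" using clV v(2) by blast
            moreover have "sd u v = q" using v by simp
            ultimately show False using q by simp
          qed
          ultimately show "u \<in> H z - V" by simp
        qed
        then show ?thesis using card_mono[of "H z - V"] finH card_image[OF inj_sd] by (metis finite_Diff)
      qed
      have cb: "card (H z - V) \<le> card J"
      proof -
        have "sd q ` (H z - V) \<subseteq> J"
        proof
          fix u assume "u \<in> sd q ` (H z - V)"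
          then obtain v where v: "v \<in> H z - V" "u = sd q v" by blast
          have "u \<in> H z" using clH[OF z q(1)] v by simp
          moreover have "x \<notin> u" "y \<notin> u" using outxy[OF v(1)] outxy[of q] q v by auto
          ultimately show "u \<in> J" using J_def I_def HS by auto
        qed
        then show ?thesis using card_mono[OF finJ] card_image[OF inj_sd] by metis
      qed
      have cc: "card J \<le> card (H z \<inter> V)"
        using IV J_def by (intro card_mono) (auto simp: finH)
      have "card (H z) = card (H z \<inter> V) + card (H z - V)" using card_Int_Diff[OF finH] by simp
      then have "card (H z) \<le> 2 * card J" using ca cb by simp
      moreover have "card (H z) = 2 * card I" using cH[OF z] cSI by simp
      ultimately have "card I \<le> card J" by simp
      then have "J = I" using card_seteq[OF finI] J_def by auto
      then have IHz: "I \<subseteq> H z" using J_def by auto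
      define Q where "Q = sd q ` I"
      have QHz: "Q \<subseteq> H z" using Q_def clH[OF z q(1)] IHz by auto
      have QV: "Q \<inter> V = {}"
      proof (rule ccontr)
        assume "Q \<inter> V \<noteq> {}"
        then obtain h where h: "h \<in> I" "sd q h \<in> V" using Q_def by blast
        then have "sd (sd q h) h \<in> V" using clV[OF h(2)] IV h(1) by blast
        then show False using q by simp
      qed
      have cQ: "card Q = card I" using Q_def card_image[OF inj_sd] by simp
      have S_eq: "S = H x \<union> H y \<union> Q"
      proof -
        have sub: "H x \<union> H y \<union> Q \<subseteq> S" using HS QHz by blast
        have "card (H x \<union> H y) + card I = card (H x) + card (H y)"
          using card_Un_Int[OF finH finH, of x y] IHxy by simp
        then have c1: "card (H x \<union> H y) = 3 * card I" using cI cHy by simp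
        have "(H x \<union> H y) \<inter> Q = {}" using QV HxV HyV by blast
        then have "card (H x \<union> H y \<union> Q) = card (H x \<union> H y) + card Q"
          using finH finI Q_def by (intro card_Un_disjoint) auto
        then have "card (H x \<union> H y \<union> Q) = card S" using c1 cQ cSI by simp
        then show ?thesis using card_seteq[OF finS sub] by simp
      qed
      have ABS: "AB \<inter> S = {}"
      proof (rule ccontr)
        assume "AB \<inter> S \<noteq> {}"
        then obtain w where w: "w \<in> AB" "w \<in> S" by blast
        then have "w \<in> Q" using S_eq ABS_pre by blast
        then show False using QV ABV w by blast
      qed
      have S_dec: "S \<subseteq> I \<union> sd A ` I \<union> sd B ` I \<union> Q" using S_eq Hx_dec Hy_dec by blast
      show False
      proof (cases "\<forall>v\<in>E. I \<subseteq> H v")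
        case True
        have I1: "I = {{}}"
        proof
          show "I \<subseteq> {{}}"
          proof
            fix h assume h: "h \<in> I"
            then have "h \<subseteq> E" using I_def SE by auto
            moreover have "\<forall>v\<in>E. v \<notin> h" using True h H_def by blast
            ultimately show "h \<in> {{}}" by auto
          qed
          show "{{}} \<subseteq> I" using e0 I_def by simp
        qed
        then have cS4: "card S = 4" using cSI by simp
        have S4: "S = {{}, A, B, q}"
        proof
          show "S \<subseteq> {{}, A, B, q}" using S_dec I1 Q_def by auto
          show "{{}, A, B, q} \<subseteq> S" using e0 A B q HS by auto
        qed
        have qS: "q \<in> S" using q HS by auto
        have AV: "A \<in> V" "B \<in> V" using A B HxV HyV H_def by auto
        have d: "A \<noteq> {}" "B \<noteq> {}" "q \<noteq> {}" "A \<noteq> B" "A \<noteq> q" "B \<noteq> q"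
          using A B q AV outxy[of q] by auto
        have "q = sd A B"
        proof
          show "q \<subseteq> sd A B"
          proof
            fix v assume vq: "v \<in> q"
            then have vE: "v \<in> E" using qS SE by auto
            define F where "F = {Y \<in> {{}, A, B, q}. v \<notin> Y}"
            have finF: "finite F" using F_def by simp
            have c2: "card F = 2" using cH[OF vE] cS4 S4 H_def F_def by simp
            show "v \<in> sd A B"
            proof (rule ccontr)
              assume "v \<notin> sd A B"
              then consider "v \<in> A" "v \<in> B" | "v \<notin> A" "v \<notin> B" by auto
              then show False
              proof cases
                case 1
                then have "F \<subseteq> {{}}" using vq F_def by auto
                then have "card F \<le> 1" using card_mono[of "{{}}" F] by simp
                then show False using c2 by simp
              next
                case 2
                then have "{{}, A, B} \<subseteq> F" using F_def by auto
                then have "card {{}, A, B} \<le> card F" using card_mono[OF finF] by blast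
                then show False using c2 d by simp
              qed
            qed
          qed
          show "sd A B \<subseteq> q"
          proof
            fix v assume vq: "v \<in> sd A B"
            then have vE: "v \<in> E" using A B SE by auto
            define F where "F = {Y \<in> {{}, A, B, q}. v \<notin> Y}"
            have finF: "finite F" using F_def by simp
            have c2: "card F = 2" using cH[OF vE] cS4 S4 H_def F_def by simp
            show "v \<in> q"
            proof (rule ccontr)
              assume vq': "v \<notin> q"
              from vq consider "v \<in> A" "v \<notin> B" | "v \<notin> A" "v \<in> B" by auto
              then show False
              proof cases
                case 1
                then have "{{}, B, q} \<subseteq> F" using F_def vq' by auto
                then have "card {{}, B, q} \<le> card F" using card_mono[OF finF] by blast
                then show False using c2 d by simp
              next
                case 2
                then have "{{}, A, q} \<subseteq> F" using F_def vq' by auto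
                then have "card {{}, A, q} \<le> card F" using card_mono[OF finF] by blast
                then show False using c2 d by simp
              qed
            qed
          qed
        qed
        moreover have "sd A B \<in> AB" unfolding AB_def by (rule image_eqI[of _ _ "{}"]) (simp_all add: I1)
        ultimately show False using ABS qS by blast
      next
        case False
        then obtain v h0 where v: "v \<in> E" "h0 \<in> I" "h0 \<notin> H v" by blast
        define Jv where "Jv = H v \<inter> I"
        have "\<not> (\<forall>h\<in>I. v \<notin> h)" using v H_def I_def by auto
        then have "2 * card {h\<in>I. v \<notin> h} = card I" using IDX[OF linI finI, of v] by blast
        moreover have "{h\<in>I. v \<notin> h} = Jv" using Jv_def H_def I_def by auto
        ultimately have cJv: "2 * card Jv = card I" by simp
        have cHv: "card (H v) = 4 * card Jv" using cH[OF v(1)] cSI cJv by simp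
        have Jv0: "card Jv \<ge> 1"
        proof -
          have "{} \<in> Jv" using Jv_def e0H e0 I_def by simp
          then have "Jv \<noteq> {}" by blast
          then show ?thesis using finI Jv_def by (simp add: Suc_le_eq card_gt_0_iff)
        qed
        have Hv_dec: "H v \<subseteq> Jv \<union> (H v \<inter> sd A ` I) \<union> (H v \<inter> sd B ` I) \<union> (H v \<inter> sd q ` I)"
          using HS[of v] S_dec unfolding Q_def Jv_def by blast
        have cosA: "card (H v \<inter> sd A ` I) \<le> card Jv" using COS[OF linI linH[OF v(1)] finH] Jv_def by simp
        have cosB: "card (H v \<inter> sd B ` I) \<le> card Jv" using COS[OF linI linH[OF v(1)] finH] Jv_def by simp
        have cosq: "card (H v \<inter> sd q ` I) \<le> card Jv" using COS[OF linI linH[OF v(1)] finH] Jv_def by simp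
        have tot: "card (H v) \<le> card Jv + card (H v \<inter> sd A ` I) + card (H v \<inter> sd B ` I) + card (H v \<inter> sd q ` I)"
        proof -
          have "card (H v) \<le> card (Jv \<union> (H v \<inter> sd A ` I) \<union> (H v \<inter> sd B ` I) \<union> (H v \<inter> sd q ` I))"
            using Hv_dec by (rule card_mono[rotated]) (simp add: finH finI Jv_def)
          then show ?thesis using card_Un4[of Jv "H v \<inter> sd A ` I" "H v \<inter> sd B ` I" "H v \<inter> sd q ` I"]
            by linarith
        qed
        have "H v \<inter> sd A ` I \<noteq> {}"
        proof
          assume "H v \<inter> sd A ` I = {}"
          then have "card (H v \<inter> sd A ` I) = 0" by simp
          then show False using tot cosB cosq cHv Jv0 by linarith
        qed
        then obtain i where i: "i \<in> I" "sd A i \<in> H v" by blast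
        have "H v \<inter> sd B ` I \<noteq> {}"
        proof
          assume "H v \<inter> sd B ` I = {}"
          then have "card (H v \<inter> sd B ` I) = 0" by simp
          then show False using tot cosA cosq cHv Jv0 by linarith
        qed
        then obtain j where j: "j \<in> I" "sd B j \<in> H v" by blast
        have "sd (sd A i) (sd B j) \<in> H v" using clH[OF v(1) i(2) j(2)] .
        moreover have "sd (sd A i) (sd B j) = sd (sd A B) (sd i j)" by (rule sd_swap)
        ultimately have inS: "sd (sd A B) (sd i j) \<in> S" using HS[of v] by auto
        have inAB: "sd (sd A B) (sd i j) \<in> AB" unfolding AB_def using clI[OF i(1) j(1)] by (rule imageI)
        have "sd (sd A B) (sd i j) \<in> AB \<inter> S" using inS inAB by (rule IntI[rotated])
        then show False using ABS by simp
      qed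
    qed
    have SV: "S - {E} \<subseteq> V"
    proof
      fix s assume s: "s \<in> S - {E}"
      then have "s \<subset> E" using SE by blast
      then obtain z where "z \<in> E" "z \<notin> s" by blast
      then have "s \<in> H z" using s H_def by simp
      then show "s \<in> V" using claim \<open>z\<in>E\<close> by blast
    qed
    show ?thesis
    proof (cases "E \<in> S \<and> E \<notin> V")
      case False
      then have "S \<subseteq> V" using SV by blast
      then have "S = V" using card_seteq[OF finV] cV by blast
      then show ?thesis using linV by simp
    next
      case True
      have I0: "card I \<ge> 1"
      proof -
        have "I \<noteq> {}" using e0 I_def by blast
        then show ?thesis using finI by (simp add: Suc_le_eq card_gt_0_iff)
      qed
      have cSE: "card (S - {E}) = card S - 1" using True by (simp add: card_Diff_singleton)
      have "card (S - {E}) \<le> card V" using card_mono[OF finV SV] .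
      have AV: "A \<in> V" using A HyV H_def by auto
      have "\<not> (\<forall>h\<in>V. x \<notin> h)" using AV A by blast
      then have kx: "2 * card {h\<in>V. x \<notin> h} = card V" using IDX[OF linV finV, of x] by blast
      have cVS: "card V = card S"
      proof -
        let ?k = "card {h\<in>V. x \<notin> h}"
        have "4 * card I - 1 \<le> 2 * ?k" using kx cSE \<open>card (S - {E}) \<le> card V\<close> cSI by simp
        moreover have "2 * ?k \<le> 4 * card I" using kx cV cSI by simp
        ultimately have "2 * ?k = 4 * card I" using par I0 by blast
        then show ?thesis using kx cSI by simp
      qed
      have "\<not> V \<subseteq> S - {E}"
      proof
        assume "V \<subseteq> S - {E}"
        then have "card V \<le> card (S - {E})" using card_mono finS by blast
        then show False using cVS cSE cSI I0 by simp
      qed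
      then obtain v0 where v0: "v0 \<in> V" "v0 \<notin> S - {E}" by blast
      have v0S: "v0 \<notin> S" using v0 True by auto
      have "v0 \<subset> E" using v0 VE True by blast
      then obtain w where w: "w \<in> E" "w \<notin> v0" by blast
      from IDX[OF linV finV, of w] show ?thesis
      proof
        assume allw: "\<forall>h\<in>V. w \<notin> h"
        have "S - {E} \<subseteq> H w" using SV allw H_def by blast
        then have "card (S - {E}) \<le> card (H w)" using card_mono finH by blast
        then show ?thesis using cSE cH[OF w(1)] cSI I0 by simp
      next
        assume c2: "2 * card {h\<in>V. w \<notin> h} = card V"
        have "insert v0 (H w) \<subseteq> {h\<in>V. w \<notin> h}" using claim[OF w(1)] v0 w H_def by auto
        then have "card (insert v0 (H w)) \<le> card {h\<in>V. w \<notin> h}" by (rule card_mono[rotated]) (simp add: finV)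
        moreover have "v0 \<notin> H w" using v0S HS by blast
        then have "card (insert v0 (H w)) = card (H w) + 1" using finH by simp
        ultimately show ?thesis using c2 cVS cH[OF w(1)] by simp
      qed
    qed
  qed
qed

lemma fwd_card:
  assumes lin: "linear_space S" and SE: "S \<subseteq> Pow E" and finE: "finite E" and XE: "X \<subseteq> E"
  shows "card S \<le> 2 ^ card X * card {Y\<in>S. Y \<subseteq> E - X}"
proof -
  define K where "K = {Y\<in>S. Y \<subseteq> E - X}"
  define F where "F p = {Y\<in>S. Y \<inter> X = p}" for p
  have finS: "finite S" by (rule finite_subset[OF SE]) (simp add: finE)
  have finX: "finite X" using finE XE finite_subset by blast
  have finK: "finite K" using finS K_def by simp
  have cl: "sd a b \<in> S" if "a \<in> S" "b \<in> S" for a b using lin that linear_space_sd by blast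
  have Fle: "card (F p) \<le> card K" for p
  proof (cases "F p = {}")
    case False
    then obtain Y0 where Y0: "Y0 \<in> S" "Y0 \<inter> X = p" using F_def by blast
    have "sd Y0 ` F p \<subseteq> K"
    proof
      fix u assume "u \<in> sd Y0 ` F p"
      then obtain Y where Y: "Y \<in> S" "Y \<inter> X = p" "u = sd Y0 Y" using F_def by blast
      have "u \<in> S" using cl Y Y0 by simp
      moreover have "Y \<subseteq> E" "Y0 \<subseteq> E" using Y Y0 SE by auto
      moreover have "u \<inter> X = {}" using Y Y0 unfolding sd_def by blast
      ultimately show "u \<in> K" using K_def Y unfolding sd_def by blast
    qed
    then show ?thesis using card_mono[OF finK] card_image[OF inj_sd] by metis
  qed simp
  have "S \<subseteq> (\<Union>p\<in>Pow X. F p)" using F_def by blast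
  then have "card S \<le> card (\<Union>p\<in>Pow X. F p)"
    by (rule card_mono[rotated]) (simp add: F_def finS finX)
  also have "\<dots> \<le> (\<Sum>p\<in>Pow X. card (F p))" by (rule card_UN_le) (simp add: finX)
  also have "\<dots> \<le> card (Pow X) * card K" using sum_bounded_above[of "Pow X" "\<lambda>p. card (F p)" "card K"] Fle by simp
  also have "\<dots> = 2 ^ card X * card K" using card_Pow[OF finX] by simp
  finally show ?thesis using K_def by simp
qed

lemma pow2_lt: "(2::nat) ^ b < 2 ^ a \<Longrightarrow> 2 * 2 ^ b \<le> (2::nat) ^ a"
proof -
  assume "(2::nat) ^ b < 2 ^ a"
  then have "b < a" using power_less_imp_less_exp by fastforce
  then have "(2::nat) ^ Suc b \<le> 2 ^ a" by (intro power_increasing) auto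
  then show ?thesis by simp
qed

lemma main_rev:
  assumes "finite E"
  shows "S \<subseteq> Pow E \<Longrightarrow> {} \<in> S \<Longrightarrow> (\<forall>X. X \<subseteq> E \<longrightarrow> (\<exists>k::nat. card {Y\<in>S. Y \<subseteq> X} = 2^k))
    \<Longrightarrow> (\<forall>X. X \<subseteq> E \<longrightarrow> card S \<le> 2 ^ card X * card {Y\<in>S. Y \<subseteq> E - X}) \<Longrightarrow> linear_space S"
  using assms
proof (induction E arbitrary: S rule: finite_psubset_induct)
  case (psubset E)
  have SE: "S \<subseteq> Pow E" and e0: "{} \<in> S" and pw: "\<forall>X. X \<subseteq> E \<longrightarrow> (\<exists>k::nat. card {Y\<in>S. Y \<subseteq> X} = 2^k)"
    and rk: "\<forall>X. X \<subseteq> E \<longrightarrow> card S \<le> 2 ^ card X * card {Y\<in>S. Y \<subseteq> E - X}"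
    using psubset.prems(1) apply assumption using psubset.prems(2) apply assumption
    using psubset.prems(3) apply assumption using psubset.prems(4) by assumption
  have finS: "finite S" by (rule finite_subset[OF SE]) (simp add: psubset.hyps)
  show ?case
  proof (cases "E = {}")
    case True
    then have "S = {{}}" using SE e0 by auto
    then show ?thesis unfolding linear_space_sd by simp
  next
    case Ene: False
    define S' where "S' z = {Y\<in>S. z \<notin> Y}" for z
    have S'eq: "S' z = {Y\<in>S. Y \<subseteq> E - {z}}" for z using SE S'_def by auto
    have SEq: "{Y\<in>S. Y \<subseteq> E} = S" using SE by auto
    from pw have "\<exists>k::nat. card {Y\<in>S. Y \<subseteq> E} = 2^k" by blast
    then obtain a where "card {Y\<in>S. Y \<subseteq> E} = 2^a" by blast
    then have a: "card S = 2 ^ a" using SEq by simp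
    have subS: "S' z \<subseteq> S" for z using S'_def by auto
    have S'lin: "linear_space (S' z)" if z: "z \<in> E" for z
    proof -
      have psub: "E - {z} \<subset> E" using z by blast
      have "E - {z} \<subseteq> E" by blast
      from pw[rule_format, OF this] obtain b where "card {Y\<in>S. Y \<subseteq> E - {z}} = 2^b" by blast
      then have b: "card (S' z) = 2 ^ b" using S'eq[of z] by simp
      show ?thesis
      proof (rule psubset.IH[OF psub])
        show "S' z \<subseteq> Pow (E - {z})" using SE S'_def by auto
        show "{} \<in> S' z" using e0 S'_def by simp
        show "\<forall>X. X \<subseteq> E - {z} \<longrightarrow> (\<exists>k::nat. card {Y\<in>S' z. Y \<subseteq> X} = 2^k)"
        proof (intro allI impI)
          fix X assume X: "X \<subseteq> E - {z}"
          have "{Y\<in>S' z. Y \<subseteq> X} = {Y\<in>S. Y \<subseteq> X}" using X S'_def by auto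
          moreover have "X \<subseteq> E" using X by blast
          ultimately show "\<exists>k::nat. card {Y\<in>S' z. Y \<subseteq> X} = 2^k" using pw[rule_format, of X] by simp
        qed
        show "\<forall>X. X \<subseteq> E - {z} \<longrightarrow> card (S' z) \<le> 2 ^ card X * card {Y\<in>S' z. Y \<subseteq> E - {z} - X}"
        proof (intro allI impI)
          fix X assume X: "X \<subseteq> E - {z}"
          have eqK: "{Y\<in>S' z. Y \<subseteq> E - {z} - X} = {Y\<in>S. Y \<subseteq> E - insert z X}" using S'_def SE by auto
          show "card (S' z) \<le> 2 ^ card X * card {Y\<in>S' z. Y \<subseteq> E - {z} - X}"
          proof (cases "card (S' z) = card S")
            case True
            then have "S' z = S" using card_seteq[OF finS subS] by simp
            then have "{Y\<in>S. Y \<subseteq> E - insert z X} = {Y\<in>S. Y \<subseteq> E - X}" using S'_def by auto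
            moreover have "X \<subseteq> E" using X by blast
            ultimately show ?thesis using eqK rk[rule_format, of X] True by simp
          next
            case False
            then have "card (S' z) < card S" using card_mono[OF finS subS[of z]] by simp
            then have "2 * card (S' z) \<le> card S" using a b pow2_lt by simp
            moreover have "card S \<le> 2 ^ card (insert z X) * card {Y\<in>S. Y \<subseteq> E - insert z X}"
              using rk[rule_format, of "insert z X"] X z by blast
            moreover have "card (insert z X) = Suc (card X)"
            proof -
              have "z \<notin> X" using X by blast
              moreover have "finite X" by (rule finite_subset[of X E]) (use X psubset.hyps in auto)
              ultimately show ?thesis by simp
            qed
            ultimately show ?thesis using eqK by simp
          qed
        qed
      qed
    qed
    show ?thesis
    proof (cases "\<exists>z\<in>E. card (S' z) = card S")
      case True
      then obtain z where z: "z \<in> E" "card (S' z) = card S" by blast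
      then have "S' z = S" using card_seteq[OF finS subS] by simp
      then show ?thesis using S'lin[OF z(1)] by simp
    next
      case False
      show ?thesis
      proof (rule lemmaL[OF psubset.hyps SE e0 Ene])
        fix z assume z: "z \<in> E"
        show "linear_space {Y\<in>S. z\<notin>Y}" using S'lin[OF z] S'_def by simp
        have "E - {z} \<subseteq> E" by blast
      from pw[rule_format, OF this] obtain b where "card {Y\<in>S. Y \<subseteq> E - {z}} = 2^b" by blast
      then have b: "card (S' z) = 2 ^ b" using S'eq[of z] by simp
        have "card (S' z) \<noteq> card S" using False z by blast
        then have "card (S' z) < card S" using card_mono[OF finS subS, of z] by simp
        then have "2 * card (S' z) \<le> card S" using a b pow2_lt by simp
        moreover have "card S \<le> 2 * card (S' z)" using rk[rule_format, of "{z}"] z S'eq[of z] by simp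
        ultimately show "2 * card {Y\<in>S. z\<notin>Y} = card S" using S'_def by simp
      qed
    qed
  qed
qed

theorem corollary3:
  fixes E :: "'a set" and S :: "'a set set"
  assumes "finite E" and "powerful E S"
  shows "linear_space S \<longleftrightarrow> (\<forall>X. X \<subseteq> E \<longrightarrow> rank_S E S X \<le> real (card X))"
proof -
  have SE: "S \<subseteq> Pow E" and pw: "\<forall>X. X \<subseteq> E \<longrightarrow> (\<exists>k::nat. card {Y\<in>S. Y \<subseteq> X} = 2^k)"
    using assms(2) unfolding powerful_def by auto
  have finS: "finite S" by (rule finite_subset[OF SE]) (simp add: assms(1))
  obtain k where "card {Y\<in>S. Y \<subseteq> {}} = 2^k" using pw by blast
  then have "{Y\<in>S. Y \<subseteq> {}} \<noteq> {}" by (metis card.empty power_not_zero zero_neq_numeral)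
  then have e0: "{} \<in> S" by auto
  have Kpos: "card {Y\<in>S. Y \<subseteq> E - X} > 0" for X
  proof -
    have "{} \<in> {Y\<in>S. Y \<subseteq> E - X}" using e0 by simp
    then show ?thesis using finS card_gt_0_iff by fastforce
  qed
  have Spos: "card S > 0" using e0 finS card_gt_0_iff by blast
  have equiv: "rank_S E S X \<le> real (card X) \<longleftrightarrow> card S \<le> 2 ^ card X * card {Y\<in>S. Y \<subseteq> E - X}" for X
  proof -
    let ?a = "real (card S)" and ?b = "real (card {Y\<in>S. Y \<subseteq> E - X})"
    have bpos: "?b > 0" using Kpos by simp
    have "rank_S E S X \<le> real (card X) \<longleftrightarrow> ?a / ?b \<le> 2 powr real (card X)"
      unfolding rank_S_def using bpos Spos by (intro log_le_iff) auto
    also have "\<dots> \<longleftrightarrow> ?a / ?b \<le> 2 ^ card X" by (simp add: powr_realpow)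
    also have "\<dots> \<longleftrightarrow> ?a \<le> 2 ^ card X * ?b" using bpos by (simp add: pos_divide_le_eq)
    also have "\<dots> \<longleftrightarrow> card S \<le> 2 ^ card X * card {Y\<in>S. Y \<subseteq> E - X}"
    proof -
      have "2 ^ card X * ?b = real (2 ^ card X * card {Y\<in>S. Y \<subseteq> E - X})" by simp
      then show ?thesis by (simp only: of_nat_le_iff)
    qed
    finally show ?thesis .
  qed
  show ?thesis
  proof
    assume lin: "linear_space S"
    show "\<forall>X. X \<subseteq> E \<longrightarrow> rank_S E S X \<le> real (card X)"
      using fwd_card[OF lin SE assms(1)] equiv by blast
  next
    assume "\<forall>X. X \<subseteq> E \<longrightarrow> rank_S E S X \<le> real (card X)"
    then have "\<forall>X. X \<subseteq> E \<longrightarrow> card S \<le> 2 ^ card X * card {Y\<in>S. Y \<subseteq> E - X}" using equiv by blast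
    then show "linear_space S" using main_rev[OF assms(1) SE e0 pw] by blast
  qed
qed

end
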